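(* Let $u$ be an inner function and let $f \in H^2$ be a unit vector with expansion $f = F_0 + uF_1 + u^2F_2 + \cdots$ (convergent in $H^2$), where $F_j \in \mathcal{K}_u$ for all $j\ge 0$. Then $f$ is $T_u$-inner if and only if $$\sum_{k=0}^\infty \langle F_k, F_{N+k}\rangle = 0 \quad \text{for all } N \ge 1.$$
   Context: $H^2$ is the Hardy space on the unit disk with inner product $\langle f,g\rangle=\int_{\mathbb{T}} f\overline{g}\,dm$ ($m$ normalized Lebesgue measure on $\mathbb{T}$). An inner function is an $H^\infty$ function with unimodular boundary values a.e. The model space is $\mathcal{K}_u=(uH^2)^\perp$. $T_u f = uf$ on $H^2$. A unit vector $f\in H^2$ is $T_u$-inner if $\langle T_u^n f, f\rangle = 0$ for all $n\ge1$. *)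

theory Defs
  imports "HOL-Complex_Analysis.Complex_Analysis"
begin

text \<open>Functions on the unit disk are represented as complex functions; only their
values on the open unit disk (ball 0 1) matter.\<close>

definition circle_mean :: "real \<Rightarrow> (complex \<Rightarrow> complex) \<Rightarrow> complex" where
  "circle_mean r h = integral {0..2*pi} (\<lambda>t. h (complex_of_real r * cis t)) / (2 * pi)"

definition H2 :: "(complex \<Rightarrow> complex) set" where
  "H2 = {f. f holomorphic_on ball 0 1 \<and>
           (\<exists>B. \<forall>r\<in>{0..<1}. Re (circle_mean r (\<lambda>z. complex_of_real ((cmod (f z))\<^sup>2))) \<le> B)}"

text \<open>H^2 inner product: the integral over T of f times conj g of the boundary values,
computed as the limit of the integral means on circles of radius r \<rightarrow> 1.\<close>
definition h2_inner :: "(complex \<Rightarrow> complex) \<Rightarrow> (complex \<Rightarrow> complex) \<Rightarrow> complex" where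
  "h2_inner f g = Lim (at_left (1::real)) (\<lambda>r. circle_mean r (\<lambda>z. f z * cnj (g z)))"

definition h2_norm :: "(complex \<Rightarrow> complex) \<Rightarrow> real" where
  "h2_norm f = sqrt (Re (h2_inner f f))"

definition inner_function :: "(complex \<Rightarrow> complex) \<Rightarrow> bool" where
  "inner_function u \<longleftrightarrow> u holomorphic_on ball 0 1 \<and> bounded (u ` ball 0 1) \<and>
     (AE t in lebesgue_on {0..2*pi}.
        \<exists>L. ((\<lambda>r. u (complex_of_real r * cis t)) \<longlongrightarrow> L) (at_left 1) \<and> cmod L = 1)"

definition model_space :: "(complex \<Rightarrow> complex) \<Rightarrow> (complex \<Rightarrow> complex) set" where
  "model_space u = {g \<in> H2. \<forall>h\<in>H2. h2_inner g (\<lambda>z. u z * h z) = 0}"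

definition Tu_inner :: "(complex \<Rightarrow> complex) \<Rightarrow> (complex \<Rightarrow> complex) \<Rightarrow> bool" where
  "Tu_inner u f \<longleftrightarrow> f \<in> H2 \<and> h2_norm f = 1 \<and>
     (\<forall>n::nat. n \<ge> 1 \<longrightarrow> h2_inner (\<lambda>z. u z ^ n * f z) f = 0)"

end

theory Submission
  imports Defs
begin

definition cf :: "(complex \<Rightarrow> complex) \<Rightarrow> nat \<Rightarrow> complex" where
  "cf g n = (deriv ^^ n) g 0 / fact n"

lemma cf_sums:
  assumes "g holomorphic_on ball 0 1" "norm z < 1"
  shows "(\<lambda>n. cf g n * z ^ n) sums g z"
  using holomorphic_power_series[OF assms(1), of z] assms(2) by (simp add: cf_def)

lemma cf_abs_summable:
  assumes "g holomorphic_on ball 0 1" "0 \<le> r" "r < 1"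
  shows "summable (\<lambda>n. norm (cf g n) * r ^ n)"
proof -
  let ?x = "complex_of_real ((1 + r) / 2)"
  have "summable (\<lambda>n. cf g n * ?x ^ n)"
  proof -
    have "norm ?x < 1" using assms by (simp only: norm_of_real) simp
    then show ?thesis using cf_sums[OF assms(1), of ?x] by (simp only: sums_iff)
  qed
  moreover have "norm (complex_of_real r) < norm ?x" using assms by (simp only: norm_of_real) simp
  ultimately have "summable (\<lambda>n. norm (cf g n * complex_of_real r ^ n))" by (rule powser_insidea)
  then show ?thesis using assms by (simp add: norm_mult norm_power)
qed

lemma cis_int_has_integral:
  fixes k :: int
  shows "((\<lambda>t. cis (of_int k * t)) has_integral (if k = 0 then 2 * pi else 0)) {0..2*pi}"
proof (cases "k = 0")
  case True
  then show ?thesis using has_integral_const_real[of "1::complex" 0 "2*pi"]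
    by (simp add: scaleR_conv_of_real)
next
  case False
  let ?F = "\<lambda>t. cis (of_int k * t) / (\<i> * of_int k)"
  have d: "(?F has_vector_derivative cis (of_int k * t)) (at t within {0..2*pi})" for t
  proof -
    have "((\<lambda>t. cis (of_int k * t)) has_derivative (\<lambda>s. (of_int k * s) *\<^sub>R (\<i> * cis (of_int k * t)))) (at t within {0..2*pi})"
      by (intro has_derivative_cis derivative_eq_intros) auto
    then have "((\<lambda>t. cis (of_int k * t)) has_vector_derivative (of_int k * \<i> * cis (of_int k * t))) (at t within {0..2*pi})"
      by (simp add: has_vector_derivative_def scaleR_conv_of_real algebra_simps)
    then have "(?F has_vector_derivative (of_int k * \<i> * cis (of_int k * t)) / (\<i> * of_int k)) (at t within {0..2*pi})"
      by (intro has_vector_derivative_divide) 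
    then show ?thesis using False by simp
  qed
  have "(?F has_vector_derivative cis (of_int k * t)) (at t within {0..2*pi})" if "t \<in> {0..2*pi}" for t
    using d .
  from fundamental_theorem_of_calculus[OF _ this]
  have "((\<lambda>t. cis (of_int k * t)) has_integral ?F (2*pi) - ?F 0) {0..2*pi}" by simp
  moreover have "cis (of_int k * (2*pi)) = 1"
    by (metis cis_multiple_2pi mult.commute Ints_of_int)
  ultimately show ?thesis using False by simp
qed

lemma fin_int:
  fixes a b :: "nat \<Rightarrow> complex" and r :: real
  shows "((\<lambda>t. (\<Sum>n<N. a n * (of_real r * cis t)^n) * cnj (\<Sum>n<N. b n * (of_real r * cis t)^n))
     has_integral (2*pi) * (\<Sum>n<N. a n * cnj (b n) * of_real (r^(2*n)))) {0..2*pi}"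
proof -
  have eq: "(\<Sum>n<N. a n * (of_real r * cis t)^n) * cnj (\<Sum>n<N. b n * (of_real r * cis t)^n)
     = (\<Sum>n<N. \<Sum>m<N. (a n * cnj (b m) * of_real (r^(n+m))) * cis (of_int (int n - int m) * t))" for t
  proof -
    have "(\<Sum>n<N. a n * (of_real r * cis t)^n) * cnj (\<Sum>n<N. b n * (of_real r * cis t)^n)
      = (\<Sum>n<N. a n * (of_real r * cis t)^n) * (\<Sum>m<N. cnj (b m) * (of_real r * cis (-t))^m)"
      by (simp add: cnj_sum cis_cnj)
    also have "\<dots> = (\<Sum>n<N. \<Sum>m<N. (a n * (of_real r * cis t)^n) * (cnj (b m) * (of_real r * cis (-t))^m))"
      by (rule sum_product)
    also have "\<dots> = (\<Sum>n<N. \<Sum>m<N. (a n * cnj (b m) * of_real (r^(n+m))) * cis (of_int (int n - int m) * t))"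
    proof (intro sum.cong refl)
      fix n m
      have "cis t ^ n * cis (-t) ^ m = cis (real n * t) * cis (real m * (-t))"
        by (simp only: Complex.DeMoivre)
      also have "\<dots> = cis (real n * t + real m * (-t))" by (simp only: cis_mult)
      also have "\<dots> = cis (of_int (int n - int m) * t)" by (simp add: algebra_simps)
      finally have H: "cis (of_int (int n - int m) * t) = cis t ^ n * cis (-t) ^ m" by simp
      show "(a n * (of_real r * cis t)^n) * (cnj (b m) * (of_real r * cis (-t))^m) =
         (a n * cnj (b m) * of_real (r^(n+m))) * cis (of_int (int n - int m) * t)"
        unfolding H power_mult_distrib power_add of_real_power of_real_mult by (simp only: mult_ac)
    qed
    finally show ?thesis .
  qed
  have "((\<lambda>t. (\<Sum>n<N. \<Sum>m<N. (a n * cnj (b m) * of_real (r^(n+m))) * cis (of_int (int n - int m) * t)))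
     has_integral (\<Sum>n<N. \<Sum>m<N. (a n * cnj (b m) * of_real (r^(n+m))) * (if int n - int m = 0 then 2*pi else 0))) {0..2*pi}"
    by (intro has_integral_sum finite_lessThan has_integral_mult_right cis_int_has_integral)
  also have "(\<Sum>n<N. \<Sum>m<N. (a n * cnj (b m) * of_real (r^(n+m))) * (if int n - int m = 0 then 2*pi else 0))
     = (\<Sum>n<N. \<Sum>m<N. if n = m then (2*pi) * (a n * cnj (b n) * of_real (r^(2*n))) else 0)"
  proof (intro sum.cong refl)
    fix n m :: nat
    show "(a n * cnj (b m) * of_real (r^(n+m))) * (if int n - int m = 0 then 2*pi else 0) =
      (if n = m then (2*pi) * (a n * cnj (b n) * of_real (r^(2*n))) else 0)"
    proof (cases "n = m")
      case True
      have 1: "(if int n - int m = 0 then 2*pi else 0) = 2*pi" using True by simp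
      have 2: "r^(n+m) = r^(2*n)" using True by (simp add: mult_2)
      show ?thesis unfolding 1 2 using True by simp
    next
      case False
      have 1: "(if int n - int m = 0 then 2*pi else 0) = 0" using False by simp
      show ?thesis unfolding 1 using False by simp
    qed
  qed
  also have "\<dots> = (2*pi) * (\<Sum>n<N. a n * cnj (b n) * of_real (r^(2*n)))"
    by (simp add: sum_distrib_left)
  finally have I: "((\<lambda>t. (\<Sum>n<N. \<Sum>m<N. (a n * cnj (b m) * of_real (r^(n+m))) * cis (of_int (int n - int m) * t)))
     has_integral (2*pi) * (\<Sum>n<N. a n * cnj (b n) * of_real (r^(2*n)))) {0..2*pi}" .
  have E: "(\<lambda>t. (\<Sum>n<N. a n * (of_real r * cis t)^n) * cnj (\<Sum>n<N. b n * (of_real r * cis t)^n))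
     = (\<lambda>t. (\<Sum>n<N. \<Sum>m<N. (a n * cnj (b m) * of_real (r^(n+m))) * cis (of_int (int n - int m) * t)))"
    by (rule ext, rule eq)
  show ?thesis unfolding E by (rule I)
qed

lemma circle_mean_sums:
  assumes g: "g holomorphic_on ball 0 1" and h: "h holomorphic_on ball 0 1" and r: "0 \<le> r" "r < 1"
  shows "(\<lambda>n. cf g n * cnj (cf h n) * of_real (r^(2*n))) sums circle_mean r (\<lambda>z. g z * cnj (h z))"
proof -
  define z where "z t = complex_of_real r * cis t" for t
  have nz: "norm (z t) = r" for t using r by (simp add: z_def norm_mult)
  have zb: "z t \<in> ball 0 1" for t using nz r by simp
  have zc: "continuous_on A z" for A unfolding z_def by (intro continuous_intros)
  have ulim: "uniform_limit {0..2*pi} (\<lambda>N t. \<Sum>n<N. cf k n * z t ^ n) (\<lambda>t. k (z t)) sequentially"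
    if k: "k holomorphic_on ball 0 1" for k
  proof -
    have "uniform_limit {0..2*pi} (\<lambda>N t. \<Sum>n<N. cf k n * z t ^ n) (\<lambda>t. \<Sum>n. cf k n * z t ^ n) sequentially"
      by (rule Weierstrass_m_test[where M="\<lambda>n. norm (cf k n) * r^n"])
         (auto simp: norm_mult norm_power nz intro: cf_abs_summable[OF k r])
    moreover have "(\<lambda>t. \<Sum>n. cf k n * z t ^ n) = (\<lambda>t. k (z t))"
    proof
      fix t show "(\<Sum>n. cf k n * z t ^ n) = k (z t)"
        using cf_sums[OF k, of "z t"] zb[of t] by (simp add: sums_iff)
    qed
    ultimately show ?thesis by simp
  qed
  have cont: "continuous_on {0..2*pi} (\<lambda>t. k (z t))" if "k holomorphic_on ball 0 1" for k
    using continuous_on_compose2[OF holomorphic_on_imp_continuous_on[OF that] zc[of "{0..2*pi}"]] zb by blast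
  have bnd: "bounded ((\<lambda>t. k (z t)) ` {0..2*pi})" if "k holomorphic_on ball 0 1" for k
    using compact_imp_bounded[OF compact_continuous_image[OF cont[OF that]]] by simp
  have bndc: "bounded ((\<lambda>t. cnj (h (z t))) ` {0..2*pi})"
  proof -
    have "continuous_on {0..2*pi} (\<lambda>t. cnj (h (z t)))" using cont[OF h] by (intro continuous_intros)
    then show ?thesis using compact_imp_bounded[OF compact_continuous_image] by blast
  qed
  have U: "uniform_limit {0..2*pi} (\<lambda>N t. (\<Sum>n<N. cf g n * z t ^ n) * cnj (\<Sum>n<N. cf h n * z t ^ n))
              (\<lambda>t. g (z t) * cnj (h (z t))) sequentially"
    by (rule uniform_lim_mult[OF ulim[OF g] bounded_linear.uniform_limit[OF bounded_linear_cnj ulim[OF h]] bnd[OF g] bndc])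
  have cN: "continuous_on {0..2*pi} (\<lambda>t. (\<Sum>n<N. cf g n * z t ^ n) * cnj (\<Sum>n<N. cf h n * z t ^ n))" for N
    using zc by (intro continuous_intros) auto
  from uniform_limit_integral[OF U cN trivial_limit_sequentially]
  obtain I J where I: "\<And>N. ((\<lambda>t. (\<Sum>n<N. cf g n * z t ^ n) * cnj (\<Sum>n<N. cf h n * z t ^ n)) has_integral I N) {0..2*pi}"
    and J: "((\<lambda>t. g (z t) * cnj (h (z t))) has_integral J) {0..2*pi}" and lim: "I \<longlonglongrightarrow> J"
    by blast
  have IN: "I N = (2*pi) * (\<Sum>n<N. cf g n * cnj (cf h n) * of_real (r^(2*n)))" for N
    using has_integral_unique[OF I[of N, unfolded z_def] fin_int[where N=N and a="cf g" and r=r and b="cf h"]] by (simp add: z_def)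
  have cm: "circle_mean r (\<lambda>z. g z * cnj (h z)) = J / (2*pi)"
    unfolding circle_mean_def using integral_unique[OF J] by (simp add: z_def)
  have "(\<lambda>N. I N / (2*pi)) \<longlonglongrightarrow> J / (2*pi)" using lim by (intro tendsto_intros) auto
  then show ?thesis unfolding sums_def cm IN by simp
qed

lemma cm_sq_eq: "circle_mean r (\<lambda>z. complex_of_real ((cmod (g z))\<^sup>2)) = circle_mean r (\<lambda>z. g z * cnj (g z))"
  by (simp only: complex_norm_square)

lemma circle_mean_sq_sums:
  assumes g: "g holomorphic_on ball 0 1" and r: "0 \<le> r" "r < 1"
  shows "(\<lambda>n. (norm (cf g n))\<^sup>2 * r^(2*n)) sums Re (circle_mean r (\<lambda>z. complex_of_real ((cmod (g z))\<^sup>2)))"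
proof -
  have "(\<lambda>n. cf g n * cnj (cf g n) * of_real (r^(2*n))) sums circle_mean r (\<lambda>z. g z * cnj (g z))"
    by (rule circle_mean_sums[OF g g r])
  then have A: "(\<lambda>n. Re (cf g n * cnj (cf g n) * of_real (r^(2*n)))) sums Re (circle_mean r (\<lambda>z. g z * cnj (g z)))"
    by (simp only: sums_complex_iff)
  have E: "(\<lambda>n. Re (cf g n * cnj (cf g n) * of_real (r^(2*n)))) = (\<lambda>n. (norm (cf g n))\<^sup>2 * r^(2*n))"
    by (rule ext) (simp only: complex_norm_square[symmetric] of_real_mult[symmetric] Re_complex_of_real)
  show ?thesis unfolding cm_sq_eq using A unfolding E .
qed

lemma H2_summable:
  assumes "g \<in> H2"
  shows "summable (\<lambda>n. (norm (cf g n))\<^sup>2)"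
proof -
  from assms obtain B where hol: "g holomorphic_on ball 0 1"
    and B: "\<And>r. r \<in> {0..<1} \<Longrightarrow> Re (circle_mean r (\<lambda>z. complex_of_real ((cmod (g z))\<^sup>2))) \<le> B"
    unfolding H2_def by blast
  have part: "(\<Sum>n<N. (norm (cf g n))\<^sup>2) \<le> B" for N
  proof -
    have ev: "\<forall>\<^sub>F r in at_left (1::real). (\<Sum>n<N. (norm (cf g n))\<^sup>2 * r^(2*n)) \<le> B"
      using eventually_at_left_real[OF zero_less_one]
    proof (rule eventually_mono)
      fix r :: real assume r: "r \<in> {0<..<1}"
      have s: "(\<lambda>n. (norm (cf g n))\<^sup>2 * r^(2*n)) sums Re (circle_mean r (\<lambda>z. complex_of_real ((cmod (g z))\<^sup>2)))"
        using circle_mean_sq_sums[OF hol] r by auto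
      have "(\<Sum>n<N. (norm (cf g n))\<^sup>2 * r^(2*n)) \<le> Re (circle_mean r (\<lambda>z. complex_of_real ((cmod (g z))\<^sup>2)))"
        using sum_le_suminf[OF sums_summable[OF s], of "{..<N}"] sums_unique[OF s] by auto
      also have "\<dots> \<le> B" using B r by auto
      finally show "(\<Sum>n<N. (norm (cf g n))\<^sup>2 * r^(2*n)) \<le> B" .
    qed
    have lim: "((\<lambda>r. \<Sum>n<N. (norm (cf g n))\<^sup>2 * r^(2*n)) \<longlongrightarrow> (\<Sum>n<N. (norm (cf g n))\<^sup>2 * 1^(2*n))) (at_left (1::real))"
      by (intro tendsto_intros)
    show ?thesis using tendsto_upperbound[OF lim ev] by simp
  qed
  show ?thesis
  proof (rule bounded_imp_summable[where B=B])
    show "(\<Sum>k\<le>n. (norm (cf g k))\<^sup>2) \<le> B" for n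
      using part[of "Suc n"] by (simp only: lessThan_Suc_atMost)
  qed simp
qed

lemma H2_iff: "g \<in> H2 \<longleftrightarrow> g holomorphic_on ball 0 1 \<and> summable (\<lambda>n. (norm (cf g n))\<^sup>2)"
proof
  assume "g \<in> H2" then show "g holomorphic_on ball 0 1 \<and> summable (\<lambda>n. (norm (cf g n))\<^sup>2)"
    using H2_summable unfolding H2_def by blast
next
  assume a: "g holomorphic_on ball 0 1 \<and> summable (\<lambda>n. (norm (cf g n))\<^sup>2)"
  have "Re (circle_mean r (\<lambda>z. complex_of_real ((cmod (g z))\<^sup>2))) \<le> (\<Sum>n. (norm (cf g n))\<^sup>2)" if r: "r \<in> {0..<1}" for r
  proof -
    have s: "(\<lambda>n. (norm (cf g n))\<^sup>2 * r^(2*n)) sums Re (circle_mean r (\<lambda>z. complex_of_real ((cmod (g z))\<^sup>2)))"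
      using circle_mean_sq_sums a r by auto
    have "(\<Sum>n. (norm (cf g n))\<^sup>2 * r^(2*n)) \<le> (\<Sum>n. (norm (cf g n))\<^sup>2)"
    proof (rule suminf_le)
      show "(norm (cf g n))\<^sup>2 * r^(2*n) \<le> (norm (cf g n))\<^sup>2" for n
        using r by (intro mult_left_le) (auto intro: power_le_one)
    qed (use s a in \<open>auto simp: sums_iff\<close>)
    then show ?thesis using s by (simp add: sums_iff)
  qed
  then show "g \<in> H2" using a unfolding H2_def by blast
qed

lemma cf_prod_summable:
  assumes "g \<in> H2" "h \<in> H2"
  shows "summable (\<lambda>n. norm (cf g n * cnj (cf h n)))"
proof (rule summable_comparison_test)
  show "\<exists>N. \<forall>n\<ge>N. norm (norm (cf g n * cnj (cf h n))) \<le> ((norm (cf g n))\<^sup>2 + (norm (cf h n))\<^sup>2) / 2"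
  proof (intro exI allI impI)
    fix n
    have "2 * (norm (cf g n) * norm (cf h n)) \<le> (norm (cf g n))\<^sup>2 + (norm (cf h n))\<^sup>2"
      using sum_squares_bound[of "norm (cf g n)" "norm (cf h n)"] by (simp add: algebra_simps)
    then show "norm (norm (cf g n * cnj (cf h n))) \<le> ((norm (cf g n))\<^sup>2 + (norm (cf h n))\<^sup>2) / 2"
      by (simp add: norm_mult)
  qed
  show "summable (\<lambda>n. ((norm (cf g n))\<^sup>2 + (norm (cf h n))\<^sup>2) / 2)"
    using H2_summable[OF assms(1)] H2_summable[OF assms(2)] by (intro summable_divide summable_add)
qed

lemma h2_inner_tendsto:
  assumes g: "g \<in> H2" and h: "h \<in> H2"
  shows "((\<lambda>r. circle_mean r (\<lambda>z. g z * cnj (h z))) \<longlongrightarrow> (\<Sum>n. cf g n * cnj (cf h n))) (at_left 1)"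
proof -
  define c where "c n = cf g n * cnj (cf h n)" for n
  have cs: "summable (\<lambda>n. norm (c n))" unfolding c_def by (rule cf_prod_summable[OF g h])
  define \<phi> where "\<phi> r = (\<Sum>n. c n * of_real (r^(2*n)))" for r :: real
  have U: "uniform_limit {0..1} (\<lambda>N r. \<Sum>n<N. c n * of_real (r^(2*n))) (\<lambda>r. \<Sum>n. c n * of_real (r^(2*n))) sequentially"
    by (rule Weierstrass_m_test[where M="\<lambda>n. norm (c n)"])
       (auto simp: norm_mult norm_power cs intro!: mult_left_le power_le_one)
  have "continuous_on {0..1} (\<lambda>r. \<Sum>n. c n * of_real (r^(2*n)))"
    by (rule uniform_limit_theorem[OF _ U]) (auto intro!: always_eventually continuous_intros)
  then have "(\<phi> \<longlongrightarrow> \<phi> 1) (at 1 within {0..1})"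
    unfolding continuous_on_def \<phi>_def by (meson atLeastAtMost_iff order_refl zero_le_one)
  then have t: "(\<phi> \<longlongrightarrow> \<phi> 1) (at_left 1)" by (simp add: at_within_Icc_at_left)
  have "\<forall>\<^sub>F r in at_left (1::real). \<phi> r = circle_mean r (\<lambda>z. g z * cnj (h z))"
    using eventually_at_left_real[OF zero_less_one]
  proof (rule eventually_mono)
    fix r :: real assume "r \<in> {0<..<1}"
    then show "\<phi> r = circle_mean r (\<lambda>z. g z * cnj (h z))"
      using circle_mean_sums[of g h r] g h unfolding \<phi>_def c_def H2_def by (auto simp: sums_iff)
  qed
  from tendsto_cong[OF this] t have "((\<lambda>r. circle_mean r (\<lambda>z. g z * cnj (h z))) \<longlongrightarrow> \<phi> 1) (at_left 1)" by simp
  then show ?thesis by (simp add: \<phi>_def c_def)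
qed

lemma h2_inner_eq:
  assumes "g \<in> H2" "h \<in> H2"
  shows "h2_inner g h = (\<Sum>n. cf g n * cnj (cf h n))"
  unfolding h2_inner_def using h2_inner_tendsto[OF assms] by (rule tendsto_Lim[rotated]) simp

lemma H2_hol: "g \<in> H2 \<Longrightarrow> g holomorphic_on ball 0 1"
  unfolding H2_def by blast

lemma cf_add: "g holomorphic_on ball 0 1 \<Longrightarrow> h holomorphic_on ball 0 1 \<Longrightarrow>
   cf (\<lambda>z. g z + h z) n = cf g n + cf h n"
  unfolding cf_def by (subst higher_deriv_add[of g "ball 0 1" h]) (auto simp: add_divide_distrib)

lemma cf_diff: "g holomorphic_on ball 0 1 \<Longrightarrow> h holomorphic_on ball 0 1 \<Longrightarrow>
   cf (\<lambda>z. g z - h z) n = cf g n - cf h n"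
  unfolding cf_def by (subst higher_deriv_diff[of g "ball 0 1" h]) (auto simp: diff_divide_distrib)

lemma cf_cmult: "g holomorphic_on ball 0 1 \<Longrightarrow> cf (\<lambda>z. c * g z) n = c * cf g n"
  unfolding cf_def by (subst higher_deriv_cmult[of g "ball 0 1"]) auto

lemma cf_zero: "cf (\<lambda>z. 0) n = 0"
  unfolding cf_def by simp

lemma H2_zero: "(\<lambda>z. 0) \<in> H2"
  unfolding H2_iff by (simp add: cf_zero)

lemma H2_add: assumes "g \<in> H2" "h \<in> H2" shows "(\<lambda>z. g z + h z) \<in> H2"
proof -
  have hol: "g holomorphic_on ball 0 1" "h holomorphic_on ball 0 1" using assms H2_hol by auto
  have "summable (\<lambda>n. (norm (cf (\<lambda>z. g z + h z) n))\<^sup>2)"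
  proof (rule summable_comparison_test)
    show "\<exists>N. \<forall>n\<ge>N. norm ((norm (cf (\<lambda>z. g z + h z) n))\<^sup>2) \<le> 2 * (norm (cf g n))\<^sup>2 + 2 * (norm (cf h n))\<^sup>2"
    proof (intro exI allI impI)
      fix n
      have "norm (cf g n + cf h n) \<le> norm (cf g n) + norm (cf h n)" by (rule norm_triangle_ineq)
      then have "(norm (cf g n + cf h n))\<^sup>2 \<le> (norm (cf g n) + norm (cf h n))\<^sup>2"
        by (intro power_mono) auto
      also have "\<dots> \<le> 2 * (norm (cf g n))\<^sup>2 + 2 * (norm (cf h n))\<^sup>2"
        using sum_squares_bound[of "norm (cf g n)" "norm (cf h n)"] by (simp add: power2_sum)
      finally show "norm ((norm (cf (\<lambda>z. g z + h z) n))\<^sup>2) \<le> 2 * (norm (cf g n))\<^sup>2 + 2 * (norm (cf h n))\<^sup>2"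
        by (simp add: cf_add[OF hol])
    qed
    show "summable (\<lambda>n. 2 * (norm (cf g n))\<^sup>2 + 2 * (norm (cf h n))\<^sup>2)"
      using H2_summable[OF assms(1)] H2_summable[OF assms(2)] by (intro summable_add summable_mult)
  qed
  then show ?thesis unfolding H2_iff using hol by (auto intro!: holomorphic_intros)
qed

lemma H2_cmult: assumes "g \<in> H2" shows "(\<lambda>z. c * g z) \<in> H2"
proof -
  have hol: "g holomorphic_on ball 0 1" using assms H2_hol by auto
  have "summable (\<lambda>n. (norm c)\<^sup>2 * (norm (cf g n))\<^sup>2)"
    using H2_summable[OF assms] by (intro summable_mult)
  then show ?thesis unfolding H2_iff using hol
    by (auto intro!: holomorphic_intros simp: cf_cmult norm_mult power_mult_distrib)
qed

lemma H2_diff: assumes "g \<in> H2" "h \<in> H2" shows "(\<lambda>z. g z - h z) \<in> H2"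
  using H2_add[OF assms(1) H2_cmult[OF assms(2), of "-1"]] by simp

lemma H2_sum: assumes "finite A" "\<And>j. j \<in> A \<Longrightarrow> G j \<in> H2" shows "(\<lambda>z. \<Sum>j\<in>A. G j z) \<in> H2"
  using assms
proof (induction A rule: finite_induct)
  case empty then show ?case using H2_zero by simp
next
  case (insert a A)
  then show ?case using H2_add[of "G a" "\<lambda>z. \<Sum>j\<in>A. G j z"] by simp
qed

lemma summable_cfp: assumes "x \<in> H2" "y \<in> H2" shows "summable (\<lambda>n. cf x n * cnj (cf y n))"
  using cf_prod_summable[OF assms] by (rule summable_norm_cancel)

lemma inner_add_left: assumes "x \<in> H2" "y \<in> H2" "w \<in> H2"
  shows "h2_inner (\<lambda>z. x z + y z) w = h2_inner x w + h2_inner y w"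
proof -
  have hol: "x holomorphic_on ball 0 1" "y holomorphic_on ball 0 1" using assms H2_hol by auto
  show ?thesis
    using assms H2_add[OF assms(1,2)] summable_cfp[OF assms(1,3)] summable_cfp[OF assms(2,3)]
    by (simp add: h2_inner_eq cf_add[OF hol] distrib_right suminf_add)
qed

lemma inner_cmult_left: assumes "x \<in> H2" "w \<in> H2"
  shows "h2_inner (\<lambda>z. c * x z) w = c * h2_inner x w"
proof -
  have hol: "x holomorphic_on ball 0 1" using assms H2_hol by auto
  show ?thesis
    using assms H2_cmult[OF assms(1)] summable_cfp[OF assms(1,2)]
    by (simp add: h2_inner_eq cf_cmult[OF hol] suminf_mult mult.assoc)
qed

lemma inner_cnj: assumes "x \<in> H2" "y \<in> H2"
  shows "h2_inner y x = cnj (h2_inner x y)"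
proof -
  have "(\<lambda>n. cnj (cf x n * cnj (cf y n))) sums cnj (\<Sum>n. cf x n * cnj (cf y n))"
    using summable_cfp[OF assms] by (simp only: sums_cnj summable_sums)
  then show ?thesis using assms by (simp add: h2_inner_eq sums_iff mult.commute)
qed

lemma inner_diff_left: assumes "x \<in> H2" "y \<in> H2" "w \<in> H2"
  shows "h2_inner (\<lambda>z. x z - y z) w = h2_inner x w - h2_inner y w"
  using inner_add_left[OF assms(1) H2_cmult[OF assms(2), of "-1"] assms(3)]
    inner_cmult_left[OF assms(2,3), of "-1"] by simp

lemma inner_add_right: assumes "x \<in> H2" "y \<in> H2" "w \<in> H2"
  shows "h2_inner w (\<lambda>z. x z + y z) = h2_inner w x + h2_inner w y"
  using inner_add_left[OF assms] inner_cnj[OF assms(1,3)] inner_cnj[OF assms(2,3)]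
    inner_cnj[OF H2_add[OF assms(1,2)] assms(3)] by simp

lemma inner_diff_right: assumes "x \<in> H2" "y \<in> H2" "w \<in> H2"
  shows "h2_inner w (\<lambda>z. x z - y z) = h2_inner w x - h2_inner w y"
  using inner_diff_left[OF assms] inner_cnj[OF assms(1,3)] inner_cnj[OF assms(2,3)]
    inner_cnj[OF H2_diff[OF assms(1,2)] assms(3)] by simp

lemma inner_cmult_right: assumes "x \<in> H2" "w \<in> H2"
  shows "h2_inner w (\<lambda>z. c * x z) = cnj c * h2_inner w x"
  using inner_cmult_left[OF assms, of c] inner_cnj[OF assms] inner_cnj[OF H2_cmult[OF assms(1)] assms(2)]
  by simp

lemma inner_sum_left: assumes "finite A" "\<And>j. j \<in> A \<Longrightarrow> G j \<in> H2" "w \<in> H2"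
  shows "h2_inner (\<lambda>z. \<Sum>j\<in>A. G j z) w = (\<Sum>j\<in>A. h2_inner (G j) w)"
  using assms(1,2)
proof (induction A rule: finite_induct)
  case empty then show ?case using H2_zero assms(3) by (simp add: h2_inner_eq cf_zero)
next
  case (insert a A)
  then show ?case using inner_add_left[OF _ H2_sum[of A G] assms(3), of "G a"] by simp
qed

lemma inner_sum_right: assumes "finite A" "\<And>j. j \<in> A \<Longrightarrow> G j \<in> H2" "w \<in> H2"
  shows "h2_inner w (\<lambda>z. \<Sum>j\<in>A. G j z) = (\<Sum>j\<in>A. h2_inner w (G j))"
proof -
  have "h2_inner w (\<lambda>z. \<Sum>j\<in>A. G j z) = cnj (h2_inner (\<lambda>z. \<Sum>j\<in>A. G j z) w)"
    using inner_cnj[OF H2_sum[OF assms(1,2)] assms(3)] .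
  also have "\<dots> = (\<Sum>j\<in>A. cnj (h2_inner (G j) w))" by (simp add: inner_sum_left[OF assms])
  also have "\<dots> = (\<Sum>j\<in>A. h2_inner w (G j))"
    by (intro sum.cong refl) (simp add: inner_cnj[OF assms(2) assms(3)])
  finally show ?thesis .
qed

lemma inner_self: assumes "x \<in> H2" shows "h2_inner x x = of_real (\<Sum>n. (norm (cf x n))\<^sup>2)"
proof -
  have "h2_inner x x = (\<Sum>n. cf x n * cnj (cf x n))"
    using assms by (simp add: h2_inner_eq)
  also have "\<dots> = (\<Sum>n. of_real ((norm (cf x n))\<^sup>2))"
    by (simp only: complex_norm_square)
  also have "\<dots> = of_real (\<Sum>n. (norm (cf x n))\<^sup>2)"
    using suminf_of_real[OF H2_summable[OF assms]] by (rule sym)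
  finally show ?thesis .
qed

lemma h2_norm_eq: assumes "x \<in> H2" shows "h2_norm x = sqrt (\<Sum>n. (norm (cf x n))\<^sup>2)"
  unfolding h2_norm_def inner_self[OF assms] by simp


lemma h2_norm_sq: assumes "x \<in> H2" shows "(h2_norm x)\<^sup>2 = (\<Sum>n. (norm (cf x n))\<^sup>2)"
  unfolding h2_norm_eq[OF assms] using suminf_nonneg[OF H2_summable[OF assms]] by simp

lemma inner_self': assumes "x \<in> H2" shows "h2_inner x x = of_real ((h2_norm x)\<^sup>2)"
  using inner_self[OF assms] h2_norm_sq[OF assms] by simp

lemma cauchy_schwarz: assumes "x \<in> H2" "y \<in> H2"
  shows "norm (h2_inner x y) \<le> h2_norm x * h2_norm y"
proof -
  have "norm (h2_inner x y) = norm (\<Sum>n. cf x n * cnj (cf y n))" using assms by (simp add: h2_inner_eq)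
  also have "\<dots> \<le> (\<Sum>n. norm (cf x n * cnj (cf y n)))" by (rule summable_norm[OF cf_prod_summable[OF assms]])
  also have "\<dots> \<le> h2_norm x * h2_norm y"
  proof (rule suminf_le_const[OF cf_prod_summable[OF assms]])
    fix N
    have "(\<Sum>n<N. norm (cf x n * cnj (cf y n))) = (\<Sum>n\<in>{..<N}. \<bar>norm (cf x n)\<bar> * \<bar>norm (cf y n)\<bar>)"
      by (simp add: norm_mult)
    also have "\<dots> \<le> L2_set (\<lambda>n. norm (cf x n)) {..<N} * L2_set (\<lambda>n. norm (cf y n)) {..<N}"
      by (rule L2_set_mult_ineq)
    also have "\<dots> \<le> h2_norm x * h2_norm y"
      unfolding h2_norm_eq[OF assms(1)] h2_norm_eq[OF assms(2)] L2_set_def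
      by (intro mult_mono real_sqrt_le_mono sum_le_suminf H2_summable assms)
         (auto intro!: suminf_nonneg H2_summable assms sum_nonneg)
    finally show "(\<Sum>n<N. norm (cf x n * cnj (cf y n))) \<le> h2_norm x * h2_norm y" .
  qed
  finally show ?thesis .
qed

lemma cm_real:
  assumes "continuous_on {0..2*pi} (\<lambda>t. \<psi> (complex_of_real r * cis t))"
  shows "Re (circle_mean r (\<lambda>z. complex_of_real (\<psi> z))) = integral {0..2*pi} (\<lambda>t. \<psi> (complex_of_real r * cis t)) / (2*pi)"
proof -
  have "((\<lambda>t. \<psi> (complex_of_real r * cis t)) has_integral integral {0..2*pi} (\<lambda>t. \<psi> (complex_of_real r * cis t))) {0..2*pi}"
    using integrable_continuous_real[OF assms] by (rule integrable_integral)
  from has_integral_of_real[OF this]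
  have "integral {0..2*pi} (\<lambda>t. complex_of_real (\<psi> (complex_of_real r * cis t))) = of_real (integral {0..2*pi} (\<lambda>t. \<psi> (complex_of_real r * cis t)))"
    by (rule integral_unique)
  then show ?thesis unfolding circle_mean_def by (simp add: Re_divide_numeral)
qed

lemma cont_circ:
  assumes "x holomorphic_on ball 0 1" "0 \<le> r" "r < 1"
  shows "continuous_on A (\<lambda>t. x (complex_of_real r * cis t))"
proof -
  have "(\<lambda>t. complex_of_real r * cis t) ` A \<subseteq> ball 0 1" using assms by (auto simp: norm_mult)
  moreover have "continuous_on A (\<lambda>t. complex_of_real r * cis t)" by (intro continuous_intros)
  ultimately show ?thesis
    using continuous_on_compose2[OF holomorphic_on_imp_continuous_on[OF assms(1)]] by blast
qed

lemma msq_tendsto: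
  assumes "x \<in> H2"
  shows "((\<lambda>r. Re (circle_mean r (\<lambda>z. complex_of_real ((cmod (x z))\<^sup>2)))) \<longlongrightarrow> (h2_norm x)\<^sup>2) (at_left 1)"
proof -
  have "((\<lambda>r. Re (circle_mean r (\<lambda>z. x z * cnj (x z)))) \<longlongrightarrow> Re (\<Sum>n. cf x n * cnj (cf x n))) (at_left 1)"
    by (intro tendsto_intros h2_inner_tendsto assms)
  moreover have "Re (\<Sum>n. cf x n * cnj (cf x n)) = (h2_norm x)\<^sup>2"
    using inner_self'[OF assms] h2_inner_eq[OF assms assms] by simp
  ultimately show ?thesis unfolding cm_sq_eq by simp
qed

lemma H2_mult:
  assumes w: "w holomorphic_on ball 0 1" and M: "\<And>z. z \<in> ball 0 1 \<Longrightarrow> norm (w z) \<le> M"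
    and g: "g \<in> H2"
  shows "(\<lambda>z. w z * g z) \<in> H2" and "h2_norm (\<lambda>z. w z * g z) \<le> M * h2_norm g"
proof -
  have hg: "g holomorphic_on ball 0 1" using g H2_hol by auto
  have M0: "0 \<le> M"
  proof -
    have "norm (w 0) \<le> M" by (rule M) simp
    then show ?thesis using norm_ge_zero[of "w 0"] by linarith
  qed
  have le: "Re (circle_mean r (\<lambda>z. complex_of_real ((cmod (w z * g z))\<^sup>2))) \<le>
        M\<^sup>2 * Re (circle_mean r (\<lambda>z. complex_of_real ((cmod (g z))\<^sup>2)))" if r: "0 \<le> r" "r < 1" for r
  proof -
    have c1: "continuous_on {0..2*pi} (\<lambda>t. (cmod (w (complex_of_real r * cis t) * g (complex_of_real r * cis t)))\<^sup>2)"
      using cont_circ[OF w r] cont_circ[OF hg r] by (intro continuous_intros)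
    have c2: "continuous_on {0..2*pi} (\<lambda>t. (cmod (g (complex_of_real r * cis t)))\<^sup>2)"
      using cont_circ[OF hg r] by (intro continuous_intros)
    have c3: "continuous_on {0..2*pi} (\<lambda>t. M\<^sup>2 * (cmod (g (complex_of_real r * cis t)))\<^sup>2)"
      using cont_circ[OF hg r] by (intro continuous_intros)
    have pt: "(cmod (w (complex_of_real r * cis t) * g (complex_of_real r * cis t)))\<^sup>2 \<le> M\<^sup>2 * (cmod (g (complex_of_real r * cis t)))\<^sup>2" for t
    proof -
      have "norm (w (complex_of_real r * cis t)) \<le> M" using r by (intro M) (auto simp: norm_mult)
      then have "(norm (w (complex_of_real r * cis t)))\<^sup>2 \<le> M\<^sup>2" by (intro power_mono) auto
      then show ?thesis by (simp add: norm_mult power_mult_distrib mult_right_mono)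
    qed
    have "integral {0..2*pi} (\<lambda>t. (cmod (w (complex_of_real r * cis t) * g (complex_of_real r * cis t)))\<^sup>2)
       \<le> integral {0..2*pi} (\<lambda>t. M\<^sup>2 * (cmod (g (complex_of_real r * cis t)))\<^sup>2)"
      by (intro integral_le integrable_continuous_real c1 c3 pt)
    also have "\<dots> = M\<^sup>2 * integral {0..2*pi} (\<lambda>t. (cmod (g (complex_of_real r * cis t)))\<^sup>2)"
      by simp
    finally show ?thesis
      unfolding cm_real[OF c1] cm_real[OF c2] by (simp add: divide_right_mono)
  qed
  from g obtain B where B: "\<And>r. r \<in> {0..<1} \<Longrightarrow> Re (circle_mean r (\<lambda>z. complex_of_real ((cmod (g z))\<^sup>2))) \<le> B"
    unfolding H2_def by blast
  have "Re (circle_mean r (\<lambda>z. complex_of_real ((cmod (w z * g z))\<^sup>2))) \<le> M\<^sup>2 * B" if "r \<in> {0..<1}" for r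
  proof -
    have "M\<^sup>2 * Re (circle_mean r (\<lambda>z. complex_of_real ((cmod (g z))\<^sup>2))) \<le> M\<^sup>2 * B"
      using B[OF that] by (intro mult_left_mono) auto
    then show ?thesis using le[of r] that by simp
  qed
  moreover have "(\<lambda>z. w z * g z) holomorphic_on ball 0 1" using w hg by (intro holomorphic_intros)
  ultimately show wg: "(\<lambda>z. w z * g z) \<in> H2" unfolding H2_def by blast
  have "(h2_norm (\<lambda>z. w z * g z))\<^sup>2 \<le> M\<^sup>2 * (h2_norm g)\<^sup>2"
  proof (rule tendsto_le[OF trivial_limit_at_left_real _ msq_tendsto[OF wg]])
    show "((\<lambda>r. M\<^sup>2 * Re (circle_mean r (\<lambda>z. complex_of_real ((cmod (g z))\<^sup>2)))) \<longlongrightarrow> M\<^sup>2 * (h2_norm g)\<^sup>2) (at_left 1)"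
      by (intro tendsto_intros msq_tendsto g)
    show "\<forall>\<^sub>F r in at_left 1. Re (circle_mean r (\<lambda>z. complex_of_real ((cmod (w z * g z))\<^sup>2)))
         \<le> M\<^sup>2 * Re (circle_mean r (\<lambda>z. complex_of_real ((cmod (g z))\<^sup>2)))"
      using eventually_at_left_real[OF zero_less_one] by (rule eventually_mono) (rule le; simp)
  qed
  then have "(h2_norm (\<lambda>z. w z * g z))\<^sup>2 \<le> (M * h2_norm g)\<^sup>2" by (simp add: power_mult_distrib)
  moreover have "0 \<le> M * h2_norm g"
    using M0 h2_norm_eq[OF g] suminf_nonneg[OF H2_summable[OF g]] by simp
  ultimately show "h2_norm (\<lambda>z. w z * g z) \<le> M * h2_norm g"
    by (rule power2_le_imp_le)
qed

lemma cm_lebesgue: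
  assumes "continuous_on {0..2*pi} (\<lambda>t. \<phi> (complex_of_real r * cis t))"
  shows "circle_mean r \<phi> = integral\<^sup>L (lebesgue_on {0..2*pi}) (\<lambda>t. \<phi> (complex_of_real r * cis t)) / (2*pi)"
  unfolding circle_mean_def
  by (subst lebesgue_integral_eq_integral[OF continuous_imp_integrable_real[OF assms]]) auto

lemma dct_lemma:
  assumes w: "w holomorphic_on ball 0 1" and M: "\<And>z. z \<in> ball 0 1 \<Longrightarrow> norm (w z) \<le> M"
    and ae: "AE t in lebesgue_on {0..2*pi}. \<exists>L. ((\<lambda>r. w (complex_of_real r * cis t)) \<longlongrightarrow> L) (at_left 1) \<and> cmod L = 1"
    and p: "continuous_on (cball 0 1) p"
  shows "((\<lambda>r. circle_mean r (\<lambda>z. (w z * p z) * cnj (w z * p z))) \<longlongrightarrow>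
           integral\<^sup>L (lebesgue_on {0..2*pi}) (\<lambda>t. p (cis t) * cnj (p (cis t))) / (2*pi)) (at_left 1)"
proof -
  obtain K where K: "\<And>z. z \<in> cball 0 1 \<Longrightarrow> norm (p z) \<le> K"
    using compact_imp_bounded[OF compact_continuous_image[OF p compact_cball]]
    unfolding bounded_iff by blast
  have wc: "continuous_on (ball 0 1) w" using w by (rule holomorphic_on_imp_continuous_on)
  define F where "F r t = (w (complex_of_real r * cis t) * p (complex_of_real r * cis t)) *
      cnj (w (complex_of_real r * cis t) * p (complex_of_real r * cis t))" for r t
  define f where "f t = p (cis t) * cnj (p (cis t))" for t
  have inball: "complex_of_real r * cis t \<in> ball 0 1" if "0 \<le> r" "r < 1" for r t
    using that by (simp add: norm_mult)
  have incball: "complex_of_real r * cis t \<in> cball 0 1" if "0 \<le> r" "r \<le> 1" for r t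
    using that by (simp add: norm_mult)
  have Fc: "continuous_on {0..2*pi} (F r)" if r: "0 \<le> r" "r < 1" for r
  proof -
    have c1: "continuous_on {0..2*pi} (\<lambda>t. w (complex_of_real r * cis t))"
      by (rule cont_circ[OF w r])
    have c2: "continuous_on {0..2*pi} (\<lambda>t. p (complex_of_real r * cis t))"
    proof -
      have "(\<lambda>t. complex_of_real r * cis t) ` {0..2*pi} \<subseteq> cball 0 1" using incball r by auto
      moreover have "continuous_on {0..2*pi} (\<lambda>t. complex_of_real r * cis t)" by (intro continuous_intros)
      ultimately show ?thesis using continuous_on_compose2[OF p] by blast
    qed
    show ?thesis unfolding F_def using c1 c2 by (intro continuous_intros)
  qed
  have fc: "continuous_on {0..2*pi} f"
  proof -
    have "continuous_on {0..2*pi} (\<lambda>t. p (cis t))"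
    proof -
      have "(\<lambda>t. cis t) ` {0..2*pi} \<subseteq> cball 0 1" by auto
      moreover have "continuous_on {0..2*pi} (\<lambda>t. cis t)" by (intro continuous_intros)
      ultimately show ?thesis using continuous_on_compose2[OF p] by blast
    qed
    then show ?thesis unfolding f_def by (intro continuous_intros)
  qed
  show ?thesis
  proof (rule tendsto_at_left_sequentially[of 0])
    fix S :: "nat \<Rightarrow> real"
    assume S1: "\<And>n. S n < 1" and S0: "\<And>n. 0 < S n" and "incseq S" and Sl: "S \<longlonglongrightarrow> 1"
    have eqn: "circle_mean (S n) (\<lambda>z. (w z * p z) * cnj (w z * p z)) = integral\<^sup>L (lebesgue_on {0..2*pi}) (F (S n)) / (2*pi)" for n
      using cm_lebesgue[of "\<lambda>z. (w z * p z) * cnj (w z * p z)" "S n"] Fc[of "S n"] S0[of n] S1[of n]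
      unfolding F_def by auto
    have "(\<lambda>n. integral\<^sup>L (lebesgue_on {0..2*pi}) (F (S n))) \<longlonglongrightarrow> integral\<^sup>L (lebesgue_on {0..2*pi}) f"
    proof (rule integral_dominated_convergence[where w="\<lambda>_. (M * K)\<^sup>2"])
      show "f \<in> borel_measurable (lebesgue_on {0..2*pi})"
        using continuous_imp_integrable_real[OF fc] by (rule borel_measurable_integrable)
      show "F (S n) \<in> borel_measurable (lebesgue_on {0..2*pi})" for n
        using continuous_imp_integrable_real[OF Fc] S0[of n] S1[of n] less_imp_le
        by (intro borel_measurable_integrable) blast
      show "integrable (lebesgue_on {0..2*pi}) (\<lambda>_. (M * K)\<^sup>2)"
        by (rule continuous_imp_integrable_real) (rule continuous_on_const)
      show "AE x in lebesgue_on {0..2*pi}. norm (F (S n) x) \<le> (M * K)\<^sup>2" for n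
      proof (rule AE_I2)
        fix t
        have a: "norm (w (complex_of_real (S n) * cis t)) \<le> M"
          using M inball S0[of n] S1[of n] less_imp_le by blast
        have b: "norm (p (complex_of_real (S n) * cis t)) \<le> K"
          using K incball S0[of n] S1[of n] less_imp_le by blast
        have "norm (F (S n) t) = (norm (w (complex_of_real (S n) * cis t)) * norm (p (complex_of_real (S n) * cis t)))\<^sup>2"
          unfolding F_def by (simp add: norm_mult power2_eq_square)
        also have "\<dots> \<le> (M * K)\<^sup>2"
        proof -
          have "0 \<le> M" using a norm_ge_zero[of "w (complex_of_real (S n) * cis t)"] by linarith
          then show ?thesis using a b by (intro power_mono mult_mono) auto
        qed
        finally show "norm (F (S n) t) \<le> (M * K)\<^sup>2" .
      qed
      show "AE t in lebesgue_on {0..2*pi}. (\<lambda>n. F (S n) t) \<longlonglongrightarrow> f t"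
        using ae
      proof (rule eventually_mono)
        fix t assume "\<exists>L. ((\<lambda>r. w (complex_of_real r * cis t)) \<longlongrightarrow> L) (at_left 1) \<and> cmod L = 1"
        then obtain L where L: "((\<lambda>r. w (complex_of_real r * cis t)) \<longlongrightarrow> L) (at_left 1)" "cmod L = 1"
          by blast
        have Sf: "filterlim S (at_left 1) sequentially"
          using Sl S1 by (intro tendsto_imp_filterlim_at_left) auto
        have wl: "(\<lambda>n. w (complex_of_real (S n) * cis t)) \<longlonglongrightarrow> L"
          using filterlim_compose[OF L(1) Sf] by (simp add: o_def)
        have zl: "(\<lambda>n. complex_of_real (S n) * cis t) \<longlonglongrightarrow> cis t"
          using Sl by (auto intro!: tendsto_eq_intros)
        have pl: "(\<lambda>n. p (complex_of_real (S n) * cis t)) \<longlonglongrightarrow> p (cis t)"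
          by (rule continuous_on_tendsto_compose[OF p zl])
             (use S0 S1 in \<open>auto simp: norm_mult less_imp_le intro!: always_eventually\<close>)
        have "(\<lambda>n. F (S n) t) \<longlonglongrightarrow> (L * p (cis t)) * cnj (L * p (cis t))"
          unfolding F_def by (intro tendsto_intros wl pl)
        moreover have "(L * p (cis t)) * cnj (L * p (cis t)) = f t"
        proof -
          have "(L * p (cis t)) * cnj (L * p (cis t)) = (L * cnj L) * (p (cis t) * cnj (p (cis t)))"
            by (simp add: ac_simps)
          also have "L * cnj L = 1" using L(2) complex_norm_square[of L] by simp
          finally show ?thesis unfolding f_def by simp
        qed
        ultimately show "(\<lambda>n. F (S n) t) \<longlonglongrightarrow> f t" by simp
      qed
    qed
    then have "(\<lambda>n. integral\<^sup>L (lebesgue_on {0..2*pi}) (F (S n)) / (2*pi)) \<longlonglongrightarrow> integral\<^sup>L (lebesgue_on {0..2*pi}) f / (2*pi)"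
      by (intro tendsto_intros) auto
    then show "(\<lambda>n. circle_mean (S n) (\<lambda>z. (w z * p z) * cnj (w z * p z))) \<longlonglongrightarrow>
           integral\<^sup>L (lebesgue_on {0..2*pi}) (\<lambda>t. p (cis t) * cnj (p (cis t))) / (2*pi)"
      unfolding eqn f_def .
  qed simp
qed

lemma h2_norm_nonneg: "x \<in> H2 \<Longrightarrow> 0 \<le> h2_norm x"
  using h2_norm_eq suminf_nonneg[OF H2_summable] by simp

lemma h2_norm_cmult: assumes "x \<in> H2" shows "h2_norm (\<lambda>z. c * x z) = norm c * h2_norm x"
proof -
  have hol: "x holomorphic_on ball 0 1" using assms H2_hol by auto
  have "(\<Sum>n. (norm (cf (\<lambda>z. c * x z) n))\<^sup>2) = (\<Sum>n. (norm c)\<^sup>2 * (norm (cf x n))\<^sup>2)"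
    by (simp add: cf_cmult[OF hol] norm_mult power_mult_distrib)
  also have "\<dots> = (norm c)\<^sup>2 * (\<Sum>n. (norm (cf x n))\<^sup>2)"
    using H2_summable[OF assms] by (rule suminf_mult)
  finally show ?thesis
    unfolding h2_norm_eq[OF assms] h2_norm_eq[OF H2_cmult[OF assms]] by (simp add: real_sqrt_mult)
qed

lemma h2_norm_triangle: assumes x: "x \<in> H2" and y: "y \<in> H2"
  shows "h2_norm (\<lambda>z. x z + y z) \<le> h2_norm x + h2_norm y"
proof -
  have xy: "(\<lambda>z. x z + y z) \<in> H2" using H2_add[OF x y] .
  have "of_real ((h2_norm (\<lambda>z. x z + y z))\<^sup>2) = h2_inner (\<lambda>z. x z + y z) (\<lambda>z. x z + y z)"
    using inner_self'[OF xy] by simp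
  also have "\<dots> = h2_inner x x + h2_inner x y + (h2_inner y x + h2_inner y y)"
    using inner_add_left[OF x y xy] inner_add_right[OF x y x] inner_add_right[OF x y y] by simp
  also have "\<dots> = of_real ((h2_norm x)\<^sup>2) + h2_inner x y + (cnj (h2_inner x y) + of_real ((h2_norm y)\<^sup>2))"
    using inner_self'[OF x] inner_self'[OF y] inner_cnj[OF x y] by simp
  finally have "(h2_norm (\<lambda>z. x z + y z))\<^sup>2 = (h2_norm x)\<^sup>2 + 2 * Re (h2_inner x y) + (h2_norm y)\<^sup>2"
    by (metis (no_types, lifting) Re_complex_of_real complex_add_cnj plus_complex.sel(1) add.assoc
        add.left_commute mult_2 of_real_add of_real_mult of_real_numeral)
  also have "\<dots> \<le> (h2_norm x)\<^sup>2 + 2 * (h2_norm x * h2_norm y) + (h2_norm y)\<^sup>2"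
    using complex_Re_le_cmod[of "h2_inner x y"] cauchy_schwarz[OF x y] by simp
  also have "\<dots> = (h2_norm x + h2_norm y)\<^sup>2" by (simp add: power2_sum)
  finally show ?thesis
    by (rule power2_le_imp_le) (simp add: h2_norm_nonneg x y)
qed

lemma cf_monomial: "cf (\<lambda>z. z ^ n) k = (if k = n then 1 else 0)"
proof -
  have "(deriv ^^ k) (\<lambda>w. (w - 0) ^ n) 0 = pochhammer (of_nat (Suc n - k)) k * (0 - 0) ^ (n - k)"
    by (rule higher_deriv_power)
  then have e: "(deriv ^^ k) (\<lambda>w. w ^ n) 0 = pochhammer (of_nat (Suc n - k)) k * 0 ^ (n - k)" by simp
  show ?thesis
  proof (cases "k = n")
    case True then show ?thesis unfolding cf_def e by (simp add: pochhammer_fact[symmetric])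
  next
    case False
    show ?thesis
    proof (cases "k < n")
      case True then show ?thesis unfolding cf_def e by simp
    next
      case False
      with \<open>k \<noteq> n\<close> have "Suc n - k = 0" "k \<noteq> 0" by auto
      then show ?thesis unfolding cf_def e using \<open>k \<noteq> n\<close> by (simp add: pochhammer_0_left)
    qed
  qed
qed

lemma cf_sum: assumes "finite A" "\<And>j. j \<in> A \<Longrightarrow> G j holomorphic_on ball 0 1"
  shows "cf (\<lambda>z. \<Sum>j\<in>A. G j z) k = (\<Sum>j\<in>A. cf (G j) k)"
  using assms
proof (induction A rule: finite_induct)
  case empty then show ?case by (simp add: cf_zero)
next
  case (insert a A)
  have "cf (\<lambda>z. G a z + (\<Sum>j\<in>A. G j z)) k = cf (G a) k + cf (\<lambda>z. \<Sum>j\<in>A. G j z) k"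
    using insert by (intro cf_add) (auto intro!: holomorphic_intros)
  then show ?case using insert by simp
qed

lemma cf_poly: "cf (\<lambda>z. \<Sum>n<N. c n * z ^ n) k = (if k < N then c k else 0)"
proof -
  have "cf (\<lambda>z. \<Sum>n<N. c n * z ^ n) k = (\<Sum>n<N. cf (\<lambda>z. c n * z ^ n) k)"
    by (rule cf_sum) (auto intro!: holomorphic_intros)
  also have "\<dots> = (\<Sum>n<N. c n * (if k = n then 1 else 0))"
    by (intro sum.cong refl) (simp add: cf_cmult[OF holomorphic_on_power[OF holomorphic_on_ident]] cf_monomial)
  also have "\<dots> = (if k < N then c k else 0)"
    by (simp add: if_distrib[of "\<lambda>x. _ * x"] sum.delta' cong: if_cong)
  finally show ?thesis .
qed

lemma inner_bound:
  assumes "inner_function u"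
  obtains M where "M \<ge> 0" "\<And>z. z \<in> ball 0 1 \<Longrightarrow> norm (u z) \<le> M"
proof -
  from assms have "bounded (u ` ball 0 1)" unfolding inner_function_def by blast
  then obtain M where M: "M > 0" "\<And>z. z \<in> ball 0 1 \<Longrightarrow> norm (u z) \<le> M"
    unfolding bounded_pos by blast
  show ?thesis
  proof (rule that[of M])
    show "0 \<le> M" using M(1) by simp
    show "norm (u z) \<le> M" if "z \<in> ball 0 1" for z using M(2) that by blast
  qed
qed

lemma inner_hol: "inner_function u \<Longrightarrow> u holomorphic_on ball 0 1"
  unfolding inner_function_def by blast

lemma iso_cont:
  assumes u: "inner_function u" and p: "p \<in> H2" and pc: "continuous_on (cball 0 1) p"
  shows "h2_norm (\<lambda>z. u z * p z) = h2_norm p"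
proof -
  obtain M where M: "M \<ge> 0" "\<And>z. z \<in> ball 0 1 \<Longrightarrow> norm (u z) \<le> M" using inner_bound[OF u] by blast
  have ae: "AE t in lebesgue_on {0..2*pi}. \<exists>L. ((\<lambda>r. u (complex_of_real r * cis t)) \<longlongrightarrow> L) (at_left 1) \<and> cmod L = 1"
    using u unfolding inner_function_def by blast
  define I where "I = integral\<^sup>L (lebesgue_on {0..2*pi}) (\<lambda>t. p (cis t) * cnj (p (cis t))) / (2*pi)"
  have t1: "((\<lambda>r. circle_mean r (\<lambda>z. (u z * p z) * cnj (u z * p z))) \<longlongrightarrow> I) (at_left 1)"
    unfolding I_def by (rule dct_lemma[OF inner_hol[OF u] M(2) ae pc])
  have ae1: "AE t in lebesgue_on {0..2*pi}. \<exists>L. ((\<lambda>r. (\<lambda>z. 1::complex) (complex_of_real r * cis t)) \<longlongrightarrow> L) (at_left 1) \<and> cmod L = 1"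
    by (rule AE_I2) (auto intro!: exI[of _ 1])
  have t2: "((\<lambda>r. circle_mean r (\<lambda>z. ((\<lambda>z. 1) z * p z) * cnj ((\<lambda>z. 1) z * p z))) \<longlongrightarrow> I) (at_left 1)"
    unfolding I_def by (rule dct_lemma[OF holomorphic_on_const _ ae1 pc, of 1]) simp
  have "h2_inner (\<lambda>z. u z * p z) (\<lambda>z. u z * p z) = I"
    unfolding h2_inner_def using t1 by (rule tendsto_Lim[rotated]) simp
  moreover have "h2_inner p p = I"
    unfolding h2_inner_def using t2 by (intro tendsto_Lim) simp_all
  ultimately show ?thesis unfolding h2_norm_def by simp
qed

lemma iso_norm:
  assumes u: "inner_function u" and g: "g \<in> H2"
  shows "h2_norm (\<lambda>z. u z * g z) = h2_norm g"
proof -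
  obtain M where M: "M \<ge> 0" "\<And>z. z \<in> ball 0 1 \<Longrightarrow> norm (u z) \<le> M" using inner_bound[OF u] by blast
  have uh: "u holomorphic_on ball 0 1" using inner_hol[OF u] .
  have hg: "g holomorphic_on ball 0 1" using g H2_hol by auto
  define P where "P N z = (\<Sum>n<N. cf g n * z ^ n)" for N z
  define E where "E N z = g z - P N z" for N z
  have Pfun: "P N = (\<lambda>z. \<Sum>n<N. cf g n * z ^ n)" for N by (rule ext) (simp add: P_def)
  have cfP: "cf (P N) k = (if k < N then cf g k else 0)" for N k unfolding Pfun by (rule cf_poly)
  have Phol: "P N holomorphic_on ball 0 1" for N unfolding Pfun by (intro holomorphic_intros)
  have P: "P N \<in> H2" for N
    unfolding H2_iff
  proof
    show "P N holomorphic_on ball 0 1" by (rule Phol)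
    show "summable (\<lambda>n. (norm (cf (P N) n))\<^sup>2)"
      by (rule summable_finite[of "{..<N}"]) (auto simp: cfP)
  qed
  have Pc: "continuous_on (cball 0 1) (P N)" for N unfolding Pfun by (intro continuous_intros)
  have E: "E N \<in> H2" for N unfolding E_def using H2_diff[OF g P] .
  have cfE: "cf (E N) k = (if k < N then 0 else cf g k)" for N k
  proof -
    have "E N = (\<lambda>z. g z - P N z)" by (rule ext) (simp add: E_def)
    then show ?thesis using cf_diff[OF hg Phol, of N k] by (simp add: cfP)
  qed
  have Elim: "(\<lambda>N. h2_norm (E N)) \<longlonglongrightarrow> 0"
  proof -
    let ?a = "\<lambda>k. (norm (cf g k))\<^sup>2"
    have sa: "summable ?a" using H2_summable[OF g] .
    have sq: "(h2_norm (E N))\<^sup>2 = suminf ?a - (\<Sum>k<N. ?a k)" for N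
    proof -
      have "(\<lambda>k. ?a k - (if k \<in> {..<N} then ?a k else 0)) sums (suminf ?a - (\<Sum>k\<in>{..<N}. ?a k))"
        by (intro sums_diff summable_sums sa sums_If_finite_set) simp
      moreover have "(\<lambda>k. ?a k - (if k \<in> {..<N} then ?a k else 0)) = (\<lambda>k. (norm (cf (E N) k))\<^sup>2)"
        by (rule ext) (simp add: cfE)
      ultimately show ?thesis using h2_norm_sq[OF E[of N]] by (simp add: sums_iff)
    qed
    have "(\<lambda>N. suminf ?a - (\<Sum>k<N. ?a k)) \<longlonglongrightarrow> suminf ?a - suminf ?a"
      by (intro tendsto_intros summable_LIMSEQ sa)
    then have "(\<lambda>N. (h2_norm (E N))\<^sup>2) \<longlonglongrightarrow> 0" by (simp add: sq)
    then have "(\<lambda>N. sqrt ((h2_norm (E N))\<^sup>2)) \<longlonglongrightarrow> sqrt 0" by (rule tendsto_real_sqrt)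
    then show ?thesis using h2_norm_nonneg[OF E] by simp
  qed
  have bnd: "\<bar>h2_norm (\<lambda>z. u z * g z) - h2_norm g\<bar> \<le> (M + 1) * h2_norm (E N)" for N
  proof -
    have uP: "(\<lambda>z. u z * P N z) \<in> H2" by (rule H2_mult(1)[OF uh M(2) P])
    have uE: "(\<lambda>z. u z * E N z) \<in> H2" by (rule H2_mult(1)[OF uh M(2) E])
    have ug: "(\<lambda>z. u z * g z) \<in> H2" by (rule H2_mult(1)[OF uh M(2) g])
    have nuE: "h2_norm (\<lambda>z. u z * E N z) \<le> M * h2_norm (E N)" by (rule H2_mult(2)[OF uh M(2) E])
    have nuP: "h2_norm (\<lambda>z. u z * P N z) = h2_norm (P N)" by (rule iso_cont[OF u P Pc])
    have e1: "(\<lambda>z. u z * g z) = (\<lambda>z. u z * P N z + u z * E N z)" by (rule ext) (simp add: E_def algebra_simps)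
    have e2: "(\<lambda>z. u z * P N z) = (\<lambda>z. u z * g z + (-1) * (u z * E N z))" by (rule ext) (simp add: E_def algebra_simps)
    have e3: "g = (\<lambda>z. P N z + E N z)" by (rule ext) (simp add: E_def)
    have e4: "P N = (\<lambda>z. g z + (-1) * E N z)" by (rule ext) (simp add: E_def)
    have i1: "h2_norm (\<lambda>z. u z * g z) \<le> h2_norm (\<lambda>z. u z * P N z) + h2_norm (\<lambda>z. u z * E N z)"
      unfolding e1 by (rule h2_norm_triangle[OF uP uE])
    have i2: "h2_norm (\<lambda>z. u z * P N z) \<le> h2_norm (\<lambda>z. u z * g z) + h2_norm (\<lambda>z. u z * E N z)"
    proof -
      have "h2_norm (\<lambda>z. u z * P N z) \<le> h2_norm (\<lambda>z. u z * g z) + h2_norm (\<lambda>z. (-1) * (u z * E N z))"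
        unfolding e2 by (rule h2_norm_triangle[OF ug H2_cmult[OF uE]])
      then show ?thesis using h2_norm_cmult[OF uE, of "-1"] by simp
    qed
    have i3: "h2_norm g \<le> h2_norm (P N) + h2_norm (E N)"
      using h2_norm_triangle[OF P E, of N N] e3 by simp
    have i4: "h2_norm (P N) \<le> h2_norm g + h2_norm (E N)"
    proof -
      have "h2_norm (P N) \<le> h2_norm g + h2_norm (\<lambda>z. (-1) * E N z)"
        by (subst e4) (rule h2_norm_triangle[OF g H2_cmult[OF E]])
      then show ?thesis using h2_norm_cmult[OF E, of "-1"] by simp
    qed
    show ?thesis using i1 i2 i3 i4 nuE nuP by (simp add: algebra_simps abs_le_iff)
  qed
  have "(\<lambda>N. (M + 1) * h2_norm (E N)) \<longlonglongrightarrow> (M + 1) * 0" by (intro tendsto_intros Elim)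
  then have "\<bar>h2_norm (\<lambda>z. u z * g z) - h2_norm g\<bar> \<le> 0"
    using bnd by (intro tendsto_lowerbound[of "\<lambda>N. (M + 1) * h2_norm (E N)" _ sequentially]) (auto intro: always_eventually)
  then show ?thesis by simp
qed

lemma inner_Q:
  assumes x: "x \<in> H2" and y: "y \<in> H2"
  shows "h2_inner (\<lambda>z. x z + c * y z) (\<lambda>z. x z + c * y z) =
    h2_inner x x + cnj c * h2_inner x y + c * h2_inner y x + c * cnj c * h2_inner y y"
proof -
  have cy: "(\<lambda>z. c * y z) \<in> H2" using H2_cmult[OF y] .
  have xcy: "(\<lambda>z. x z + c * y z) \<in> H2" using H2_add[OF x cy] .
  have "h2_inner (\<lambda>z. x z + c * y z) (\<lambda>z. x z + c * y z) =
     h2_inner x (\<lambda>z. x z + c * y z) + h2_inner (\<lambda>z. c * y z) (\<lambda>z. x z + c * y z)"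
    by (rule inner_add_left[OF x cy xcy])
  also have "h2_inner x (\<lambda>z. x z + c * y z) = h2_inner x x + cnj c * h2_inner x y"
    using inner_add_right[OF x cy x] inner_cmult_right[OF y x] by simp
  also have "h2_inner (\<lambda>z. c * y z) (\<lambda>z. x z + c * y z) = c * h2_inner y x + c * cnj c * h2_inner y y"
    using inner_cmult_left[OF y xcy] inner_add_right[OF x cy y] inner_cmult_right[OF y y]
    by (simp add: algebra_simps)
  finally show ?thesis by (simp add: algebra_simps)
qed

lemma polar:
  assumes x: "x \<in> H2" and y: "y \<in> H2"
  defines "Q \<equiv> \<lambda>c. h2_inner (\<lambda>z. x z + c * y z) (\<lambda>z. x z + c * y z)"
  shows "4 * h2_inner x y = Q 1 - Q (-1) + \<i> * Q \<i> - \<i> * Q (-\<i>)"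
  unfolding Q_def inner_Q[OF x y]
  by (simp add: algebra_simps)

lemma iso_inner:
  assumes u: "inner_function u" and x: "x \<in> H2" and y: "y \<in> H2"
  shows "h2_inner (\<lambda>z. u z * x z) (\<lambda>z. u z * y z) = h2_inner x y"
proof -
  obtain M where M: "M \<ge> 0" "\<And>z. z \<in> ball 0 1 \<Longrightarrow> norm (u z) \<le> M" using inner_bound[OF u] by blast
  have uh: "u holomorphic_on ball 0 1" using inner_hol[OF u] .
  have ux: "(\<lambda>z. u z * x z) \<in> H2" by (rule H2_mult(1)[OF uh M(2) x])
  have uy: "(\<lambda>z. u z * y z) \<in> H2" by (rule H2_mult(1)[OF uh M(2) y])
  have Qe: "h2_inner (\<lambda>z. u z * x z + c * (u z * y z)) (\<lambda>z. u z * x z + c * (u z * y z)) =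
        h2_inner (\<lambda>z. x z + c * y z) (\<lambda>z. x z + c * y z)" for c
  proof -
    have xcy: "(\<lambda>z. x z + c * y z) \<in> H2" using H2_add[OF x H2_cmult[OF y]] .
    have e: "(\<lambda>z. u z * x z + c * (u z * y z)) = (\<lambda>z. u z * (x z + c * y z))" by (rule ext) (simp add: algebra_simps)
    have uxcy: "(\<lambda>z. u z * (x z + c * y z)) \<in> H2" by (rule H2_mult(1)[OF uh M(2) xcy])
    show ?thesis unfolding e inner_self'[OF uxcy] inner_self'[OF xcy] iso_norm[OF u xcy] ..
  qed
  have "4 * h2_inner (\<lambda>z. u z * x z) (\<lambda>z. u z * y z) = 4 * h2_inner x y"
    unfolding polar[OF ux uy] polar[OF x y] Qe ..
  then show ?thesis by simp
qed

lemma iso_pow: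
  assumes u: "inner_function u" and x: "x \<in> H2"
  shows "(\<lambda>z. u z ^ m * x z) \<in> H2"
proof (induction m)
  case 0 then show ?case using x by simp
next
  case (Suc m)
  obtain M where M: "M \<ge> 0" "\<And>z. z \<in> ball 0 1 \<Longrightarrow> norm (u z) \<le> M" using inner_bound[OF u] by blast
  have "(\<lambda>z. u z * (u z ^ m * x z)) \<in> H2" by (rule H2_mult(1)[OF inner_hol[OF u] M(2) Suc])
  then show ?case by (simp add: mult.assoc)
qed

lemma iso_pow_inner:
  assumes u: "inner_function u" and x: "x \<in> H2" and y: "y \<in> H2"
  shows "h2_inner (\<lambda>z. u z ^ m * x z) (\<lambda>z. u z ^ m * y z) = h2_inner x y"
proof (induction m)
  case 0 then show ?case by simp
next
  case (Suc m)
  have "h2_inner (\<lambda>z. u z * (u z ^ m * x z)) (\<lambda>z. u z * (u z ^ m * y z)) = h2_inner (\<lambda>z. u z ^ m * x z) (\<lambda>z. u z ^ m * y z)"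
    by (rule iso_inner[OF u iso_pow[OF u x] iso_pow[OF u y]])
  then show ?case using Suc by (simp add: mult.assoc)
qed

lemma model_H2: "g \<in> model_space u \<Longrightarrow> g \<in> H2"
  unfolding model_space_def by blast

lemma model_orth: "g \<in> model_space u \<Longrightarrow> h \<in> H2 \<Longrightarrow> h2_inner g (\<lambda>z. u z * h z) = 0"
  unfolding model_space_def by blast

lemma iso_pow_norm:
  assumes u: "inner_function u" and x: "x \<in> H2"
  shows "h2_norm (\<lambda>z. u z ^ m * x z) = h2_norm x"
  unfolding h2_norm_def iso_pow_inner[OF u x x] ..

lemma orth_terms:
  assumes u: "inner_function u" and F: "\<And>j. F j \<in> model_space u"
  shows "h2_inner (\<lambda>z. u z ^ (n + j) * F j z) (\<lambda>z. u z ^ k * F k z) =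
           (if k = n + j then h2_inner (F j) (F k) else 0)"
proof -
  have FH: "F i \<in> H2" for i using F model_H2 by blast
  show ?thesis
  proof (cases "n + j \<le> k")
    case True
    define d where "d = k - (n + j)"
    have k: "k = (n + j) + d" using True by (simp add: d_def)
    have e: "(\<lambda>z. u z ^ k * F k z) = (\<lambda>z. u z ^ (n + j) * (u z ^ d * F k z))"
      by (rule ext) (simp add: k power_add mult.assoc)
    have "h2_inner (\<lambda>z. u z ^ (n + j) * F j z) (\<lambda>z. u z ^ k * F k z) = h2_inner (F j) (\<lambda>z. u z ^ d * F k z)"
      unfolding e by (rule iso_pow_inner[OF u FH iso_pow[OF u FH]])
    also have "\<dots> = (if k = n + j then h2_inner (F j) (F k) else 0)"
    proof (cases "d = 0")
      case True
      then show ?thesis using k by simp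
    next
      case False
      then obtain d' where d': "d = Suc d'" by (cases d) auto
      have "(\<lambda>z. u z ^ d * F k z) = (\<lambda>z. u z * (u z ^ d' * F k z))"
        by (rule ext) (simp add: d' mult.assoc)
      then have "h2_inner (F j) (\<lambda>z. u z ^ d * F k z) = 0"
        using model_orth[OF F iso_pow[OF u FH]] by simp
      then show ?thesis using False k by simp
    qed
    finally show ?thesis .
  next
    case False
    define d where "d = (n + j) - k"
    have a: "n + j = k + Suc (d - 1)" using False by (simp add: d_def)
    have e: "(\<lambda>z. u z ^ (n + j) * F j z) = (\<lambda>z. u z ^ k * (u z * (u z ^ (d - 1) * F j z)))"
      by (rule ext) (simp add: a power_add mult.assoc)
    have uH: "(\<lambda>z. u z * (u z ^ (d - 1) * F j z)) \<in> H2"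
    proof -
      have "(\<lambda>z. u z * (u z ^ (d - 1) * F j z)) = (\<lambda>z. u z ^ Suc (d - 1) * F j z)"
        by (rule ext) (simp add: mult.assoc)
      then show ?thesis using iso_pow[OF u FH, of "Suc (d - 1)" j] by simp
    qed
    have "h2_inner (\<lambda>z. u z ^ (n + j) * F j z) (\<lambda>z. u z ^ k * F k z) =
           h2_inner (\<lambda>z. u z * (u z ^ (d - 1) * F j z)) (F k)"
      unfolding e by (rule iso_pow_inner[OF u uH FH])
    also have "\<dots> = cnj (h2_inner (F k) (\<lambda>z. u z * (u z ^ (d - 1) * F j z)))"
      by (rule inner_cnj[OF FH uH])
    also have "\<dots> = 0" using model_orth[OF F iso_pow[OF u FH]] by simp
    finally show ?thesis using False by simp
  qed
qed

lemma partial_inner: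
  assumes u: "inner_function u" and F: "\<And>j. F j \<in> model_space u"
  shows "h2_inner (\<lambda>z. u z ^ n * (\<Sum>j<M. u z ^ j * F j z)) (\<lambda>z. \<Sum>j<M. u z ^ j * F j z) =
          (\<Sum>j<M - n. h2_inner (F j) (F (n + j)))"
proof -
  have FH: "F i \<in> H2" for i using F model_H2 by blast
  have e: "(\<lambda>z. u z ^ n * (\<Sum>j<M. u z ^ j * F j z)) = (\<lambda>z. \<Sum>j<M. u z ^ (n + j) * F j z)"
    by (rule ext) (simp add: sum_distrib_left power_add mult.assoc)
  have "h2_inner (\<lambda>z. \<Sum>j<M. u z ^ (n + j) * F j z) (\<lambda>z. \<Sum>j<M. u z ^ j * F j z) =
     (\<Sum>j<M. h2_inner (\<lambda>z. u z ^ (n + j) * F j z) (\<lambda>z. \<Sum>k<M. u z ^ k * F k z))"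
    by (rule inner_sum_left) (auto intro: iso_pow[OF u FH] H2_sum)
  also have "\<dots> = (\<Sum>j<M. \<Sum>k<M. h2_inner (\<lambda>z. u z ^ (n + j) * F j z) (\<lambda>z. u z ^ k * F k z))"
    by (intro sum.cong refl inner_sum_right) (auto intro: iso_pow[OF u FH])
  also have "\<dots> = (\<Sum>j<M. \<Sum>k<M. if k = n + j then h2_inner (F j) (F k) else 0)"
    by (intro sum.cong refl) (rule orth_terms[OF u F])
  also have "\<dots> = (\<Sum>j<M. if n + j \<in> {..<M} then h2_inner (F j) (F (n + j)) else 0)"
    by (intro sum.cong refl) (simp only: sum.delta finite_lessThan)
  also have "\<dots> = (\<Sum>j\<in>{..<M} \<inter> {j. n + j \<in> {..<M}}. h2_inner (F j) (F (n + j)))"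
    by (simp only: sum.inter_restrict[OF finite_lessThan] mem_Collect_eq)
  also have "{..<M} \<inter> {j. n + j \<in> {..<M}} = {..<M - n}" by auto
  finally show ?thesis unfolding e .
qed

lemma series_sums:
  assumes u: "inner_function u" and f: "f \<in> H2" and nf: "h2_norm f = 1"
    and F: "\<And>j. F j \<in> model_space u"
    and lim: "(\<lambda>n. h2_norm (\<lambda>z. f z - (\<Sum>j<n. u z ^ j * F j z))) \<longlonglongrightarrow> 0"
  shows "(\<lambda>k. h2_inner (F k) (F (n + k))) sums h2_inner (\<lambda>z. u z ^ n * f z) f"
proof -
  have FH: "F i \<in> H2" for i using F model_H2 by blast
  define S where "S M z = (\<Sum>j<M. u z ^ j * F j z)" for M z
  define e where "e M z = f z - S M z" for M z
  have SH: "S M \<in> H2" for M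
  proof -
    have "(\<lambda>z. \<Sum>j<M. u z ^ j * F j z) \<in> H2" by (rule H2_sum) (auto intro: iso_pow[OF u FH])
    moreover have "S M = (\<lambda>z. \<Sum>j<M. u z ^ j * F j z)" by (rule ext) (simp add: S_def)
    ultimately show ?thesis by simp
  qed
  have eH: "e M \<in> H2" for M
  proof -
    have "e M = (\<lambda>z. f z - S M z)" by (rule ext) (simp add: e_def)
    then show ?thesis using H2_diff[OF f SH] by simp
  qed
  have el: "(\<lambda>M. h2_norm (e M)) \<longlonglongrightarrow> 0"
  proof -
    have "e M = (\<lambda>z. f z - (\<Sum>j<M. u z ^ j * F j z))" for M by (rule ext) (simp add: e_def S_def)
    then show ?thesis using lim by simp
  qed
  let ?L = "h2_inner (\<lambda>z. u z ^ n * f z) f"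
  let ?A = "\<lambda>M. h2_inner (\<lambda>z. u z ^ n * S M z) (S M)"
  have bnd: "norm (?L - ?A M) \<le> h2_norm (e M) + (1 + h2_norm (e M)) * h2_norm (e M)" for M
  proof -
    have ufH: "(\<lambda>z. u z ^ n * f z) \<in> H2" by (rule iso_pow[OF u f])
    have uSH: "(\<lambda>z. u z ^ n * S M z) \<in> H2" by (rule iso_pow[OF u SH])
    have ueH: "(\<lambda>z. u z ^ n * e M z) \<in> H2" by (rule iso_pow[OF u eH])
    have e1: "(\<lambda>z. u z ^ n * e M z) = (\<lambda>z. u z ^ n * f z - u z ^ n * S M z)"
      by (rule ext) (simp add: e_def algebra_simps)
    have d1: "?L - h2_inner (\<lambda>z. u z ^ n * S M z) f = h2_inner (\<lambda>z. u z ^ n * e M z) f"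
      unfolding e1 by (rule inner_diff_left[OF ufH uSH f, symmetric])
    have e2: "e M = (\<lambda>z. f z - S M z)" by (rule ext) (simp add: e_def)
    have d2: "h2_inner (\<lambda>z. u z ^ n * S M z) f - ?A M = h2_inner (\<lambda>z. u z ^ n * S M z) (e M)"
      unfolding e2 by (rule inner_diff_right[OF f SH uSH, symmetric])
    have SN: "h2_norm (S M) \<le> 1 + h2_norm (e M)"
    proof -
      have eqS: "S M = (\<lambda>z. f z + (-1) * e M z)" by (rule ext) (simp add: e_def)
      have "h2_norm (S M) \<le> h2_norm f + h2_norm (\<lambda>z. (-1) * e M z)"
        by (subst eqS) (rule h2_norm_triangle[OF f H2_cmult[OF eH]])
      then show ?thesis using h2_norm_cmult[OF eH, of "-1"] nf by simp
    qed
    have "?L - ?A M = h2_inner (\<lambda>z. u z ^ n * e M z) f + h2_inner (\<lambda>z. u z ^ n * S M z) (e M)"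
      using d1 d2 by (simp add: algebra_simps)
    then have "norm (?L - ?A M) \<le> norm (h2_inner (\<lambda>z. u z ^ n * e M z) f) + norm (h2_inner (\<lambda>z. u z ^ n * S M z) (e M))"
      by (simp add: norm_triangle_ineq)
    also have "\<dots> \<le> h2_norm (e M) * h2_norm f + h2_norm (S M) * h2_norm (e M)"
      using cauchy_schwarz[OF ueH f] cauchy_schwarz[OF uSH eH]
      unfolding iso_pow_norm[OF u eH] iso_pow_norm[OF u SH] by (rule add_mono)
    also have "h2_norm (e M) * h2_norm f + h2_norm (S M) * h2_norm (e M) \<le> h2_norm (e M) + (1 + h2_norm (e M)) * h2_norm (e M)"
      using mult_right_mono[OF SN h2_norm_nonneg[OF eH]] nf by simp
    finally show ?thesis .
  qed
  have "(\<lambda>M. h2_norm (e M) + (1 + h2_norm (e M)) * h2_norm (e M)) \<longlonglongrightarrow> 0 + (1 + 0) * 0"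
    by (intro tendsto_intros el)
  then have gl: "(\<lambda>M. h2_norm (e M) + (1 + h2_norm (e M)) * h2_norm (e M)) \<longlonglongrightarrow> 0" by simp
  have "(\<lambda>M. ?L - ?A M) \<longlonglongrightarrow> 0"
    by (rule Lim_null_comparison[OF always_eventually[OF allI[OF bnd]] gl])
  then have "(\<lambda>M. ?L - (?L - ?A M)) \<longlonglongrightarrow> ?L - 0" by (intro tendsto_intros)
  then have "?A \<longlonglongrightarrow> ?L" by (simp only: diff_diff_eq2 add_diff_cancel_left' diff_zero)
  moreover have "?A M = (\<Sum>j<M - n. h2_inner (F j) (F (n + j)))" for M
  proof -
    have Sfun: "S M = (\<lambda>z. \<Sum>j<M. u z ^ j * F j z)" by (rule ext) (simp add: S_def)
    show ?thesis unfolding Sfun by (rule partial_inner[OF u F])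
  qed
  ultimately have "(\<lambda>M. \<Sum>j<M - n. h2_inner (F j) (F (n + j))) \<longlonglongrightarrow> ?L" by (simp only:)
  then have "(\<lambda>K. \<Sum>j<(K + n) - n. h2_inner (F j) (F (n + j))) \<longlonglongrightarrow> ?L"
    by (rule LIMSEQ_ignore_initial_segment)
  then show ?thesis unfolding sums_def by (simp only: diff_add_inverse2)
qed

theorem proposition3p1:
  fixes u f :: "complex \<Rightarrow> complex" and F :: "nat \<Rightarrow> complex \<Rightarrow> complex"
  assumes "inner_function u"
    and "f \<in> H2" and "h2_norm f = 1"
    and "\<And>j. F j \<in> model_space u"
    and "(\<lambda>n. h2_norm (\<lambda>z. f z - (\<Sum>j<n. u z ^ j * F j z))) \<longlonglongrightarrow> 0"
  shows "Tu_inner u f \<longleftrightarrow>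
           (\<forall>N::nat. N \<ge> 1 \<longrightarrow> (\<lambda>k. h2_inner (F k) (F (N + k))) sums 0)"
proof
  assume "Tu_inner u f"
  then have z: "\<And>n::nat. n \<ge> 1 \<Longrightarrow> h2_inner (\<lambda>z. u z ^ n * f z) f = 0"
    unfolding Tu_inner_def by blast
  show "\<forall>N::nat. N \<ge> 1 \<longrightarrow> (\<lambda>k. h2_inner (F k) (F (N + k))) sums 0"
  proof (intro allI impI)
    fix N :: nat assume "N \<ge> 1"
    then show "(\<lambda>k. h2_inner (F k) (F (N + k))) sums 0"
      using series_sums[OF assms, of N] z[of N] by simp
  qed
next
  assume a: "\<forall>N::nat. N \<ge> 1 \<longrightarrow> (\<lambda>k. h2_inner (F k) (F (N + k))) sums 0"
  have "h2_inner (\<lambda>z. u z ^ n * f z) f = 0" if "n \<ge> 1" for n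
    using sums_unique2[OF series_sums[OF assms, of n] a[rule_format, OF that]] .
  then show "Tu_inner u f" unfolding Tu_inner_def using assms(2,3) by blast
qed


end
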